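(* Let $(X_{1,\infty},f_{1,\infty})$ be a topological nonautonomous dynamical system such that the sequence $f_{1,\infty}$ is equicontinuous. Then $h_{\mathrm{top}}(f^{[k]}_{1,\infty})=k\cdot h_{\mathrm{top}}(f_{1,\infty})$ for all $k\ge1$.
   Context: Topological NDS: compact metric spaces $(X_n,\varrho_n)$, continuous $f_n:X_n\to X_{n+1}$; $f_k^n=f_{k+n-1}\circ\cdots\circ f_k$, $f_k^0=\mathrm{id}$. Equicontinuity: for every $\varepsilon>0$ there is $\delta>0$ with $\varrho_{n+1}(f_nx,f_ny)<\varepsilon$ whenever $\varrho_n(x,y)<\delta$, uniformly in $n$. Topological entropy: with $\varrho_{1,n}(x,y)=\max_{0\le i<n}\varrho_{1+i}(f_1^ix,f_1^iy)$, let $r_{\mathrm{sep}}(n,\varepsilon)$ be the maximal cardinality of a subset of $X_1$ whose distinct points have $\varrho_{1,n}$-distance $>\varepsilon$; $h_{\mathrm{top}}(f_{1,\infty})=\lim_{\varepsilon\searrow0}\limsup_n\frac1n\log r_{\mathrm{sep}}(n,\varepsilon)$. The $k$-th power system is $X^{[k]}_{1,\infty}=\{X_{(n-1)k+1}\}_{n\ge1}$ with maps $f^{[k]}_{1,\infty}=\{f^k_{(n-1)k+1}\}_{n\ge1}$. *)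

theory Defs
  imports "HOL-Analysis.Analysis"
begin

definition TNDS :: "(nat \<Rightarrow> 'a set) \<Rightarrow> (nat \<Rightarrow> 'a \<Rightarrow> 'a \<Rightarrow> real) \<Rightarrow> (nat \<Rightarrow> 'a \<Rightarrow> 'a) \<Rightarrow> bool" where
  "TNDS X d f \<longleftrightarrow> (\<forall>n\<ge>1. Metric_space (X n) (d n)
      \<and> compact_space (Metric_space.mtopology (X n) (d n))
      \<and> continuous_map (Metric_space.mtopology (X n) (d n))
                        (Metric_space.mtopology (X (Suc n)) (d (Suc n))) (f n))"

definition equicont_seq :: "(nat \<Rightarrow> 'a set) \<Rightarrow> (nat \<Rightarrow> 'a \<Rightarrow> 'a \<Rightarrow> real) \<Rightarrow> (nat \<Rightarrow> 'a \<Rightarrow> 'a) \<Rightarrow> bool" where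
  "equicont_seq X d f \<longleftrightarrow> (\<forall>\<epsilon>>0. \<exists>\<delta>>0. \<forall>n\<ge>1. \<forall>x\<in>X n. \<forall>y\<in>X n.
      d n x y < \<delta> \<longrightarrow> d (Suc n) (f n x) (f n y) < \<epsilon>)"

fun fiter :: "(nat \<Rightarrow> 'a \<Rightarrow> 'a) \<Rightarrow> nat \<Rightarrow> nat \<Rightarrow> 'a \<Rightarrow> 'a" where
  "fiter f k 0 = id"
| "fiter f k (Suc n) = f (k + n) \<circ> fiter f k n"

definition bowen_dist :: "(nat \<Rightarrow> 'a \<Rightarrow> 'a \<Rightarrow> real) \<Rightarrow> (nat \<Rightarrow> 'a \<Rightarrow> 'a) \<Rightarrow> nat \<Rightarrow> 'a \<Rightarrow> 'a \<Rightarrow> real" where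
  "bowen_dist d f n x y = Max ((\<lambda>i. d (1 + i) (fiter f 1 i x) (fiter f 1 i y)) ` {..<n})"

definition r_sep :: "(nat \<Rightarrow> 'a set) \<Rightarrow> (nat \<Rightarrow> 'a \<Rightarrow> 'a \<Rightarrow> real) \<Rightarrow> (nat \<Rightarrow> 'a \<Rightarrow> 'a) \<Rightarrow> nat \<Rightarrow> real \<Rightarrow> ereal" where
  "r_sep X d f n \<epsilon> = (SUP E\<in>{E. finite E \<and> E \<subseteq> X 1 \<and>
       (\<forall>x\<in>E. \<forall>y\<in>E. x \<noteq> y \<longrightarrow> bowen_dist d f n x y > \<epsilon>)}. ereal (real (card E)))"

definition ereal_ln :: "ereal \<Rightarrow> ereal" where
  "ereal_ln r = (if r = \<infinity> then \<infinity> else ereal (ln (real_of_ereal r)))"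

definition htop :: "(nat \<Rightarrow> 'a set) \<Rightarrow> (nat \<Rightarrow> 'a \<Rightarrow> 'a \<Rightarrow> real) \<Rightarrow> (nat \<Rightarrow> 'a \<Rightarrow> 'a) \<Rightarrow> ereal" where
  "htop X d f = Lim (at_right (0::real))
     (\<lambda>\<epsilon>. limsup (\<lambda>n. ereal_ln (r_sep X d f n \<epsilon>) / ereal (real n)))"

definition powX :: "nat \<Rightarrow> (nat \<Rightarrow> 'b) \<Rightarrow> nat \<Rightarrow> 'b" where
  "powX k X n = X ((n - 1) * k + 1)"

definition powf :: "nat \<Rightarrow> (nat \<Rightarrow> 'a \<Rightarrow> 'a) \<Rightarrow> nat \<Rightarrow> 'a \<Rightarrow> 'a" where
  "powf k f n = fiter f ((n - 1) * k + 1) k"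

end

theory Submission
  imports Defs
begin

lemma fiter_add: "fiter f a (m + n) = fiter f (a + m) n \<circ> fiter f a m"
  by (induction n) (auto simp: add.assoc)

lemma fiter_pow: "fiter (powf k f) 1 i = fiter f 1 (i * k)"
proof (induction i)
  case 0 then show ?case by simp
next
  case (Suc i)
  have "fiter (powf k f) 1 (Suc i) = powf k f (1 + i) \<circ> fiter f 1 (i * k)"
    using Suc by simp
  also have "\<dots> = fiter f (1 + i * k) k \<circ> fiter f 1 (i * k)"
    by (simp add: powf_def)
  also have "\<dots> = fiter f 1 (i * k + k)" by (simp add: fiter_add)
  finally show ?case by (simp add: add.commute)
qed

lemma fiter_in:
  assumes "TNDS X d f" "j \<ge> 1" "x \<in> X j"
  shows "fiter f j i x \<in> X (j + i)"
proof (induction i)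
  case 0 then show ?case using assms by simp
next
  case (Suc i)
  have "continuous_map (Metric_space.mtopology (X (j+i)) (d (j+i)))
          (Metric_space.mtopology (X (Suc (j+i))) (d (Suc (j+i)))) (f (j+i))"
   and "Metric_space (X (j+i)) (d (j+i))" "Metric_space (X (Suc (j+i))) (d (Suc (j+i)))"
    using assms(1,2) unfolding TNDS_def by auto
  then have "f (j+i) (fiter f j i x) \<in> X (Suc (j+i))"
    using Suc unfolding continuous_map_def
      Metric_space.topspace_mtopology[OF \<open>Metric_space (X (j+i)) (d (j+i))\<close>]
      Metric_space.topspace_mtopology[OF \<open>Metric_space (X (Suc (j+i))) (d (Suc (j+i)))\<close>]
    by (simp add: Pi_iff)
  then show ?case by simp
qed

lemma bowen_pow_le:
  assumes "n \<ge> 1" "k \<ge> 1"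
  shows "bowen_dist (powX k d) (powf k f) n x y \<le> bowen_dist d f (n * k) x y"
proof -
  let ?g = "\<lambda>i. d (i * k + 1) (fiter f 1 (i*k) x) (fiter f 1 (i*k) y)"
  have "bowen_dist (powX k d) (powf k f) n x y = Max (?g ` {..<n})"
    unfolding bowen_dist_def powX_def fiter_pow by simp
  also have "\<dots> \<le> bowen_dist d f (n * k) x y"
    unfolding bowen_dist_def
  proof (rule Max.boundedI)
    show "finite (?g ` {..<n})" by simp
    show "?g ` {..<n} \<noteq> {}"
      using assms(1) by (simp add: lessThan_empty_iff)
    fix a assume "a \<in> ?g ` {..<n}"
    then obtain i where i: "i < n" "a = ?g i" by auto
    have ik: "i * k < n * k" using i assms by simp
    show "a \<le> Max ((\<lambda>i. d (1 + i) (fiter f 1 i x) (fiter f 1 i y)) ` {..<n * k})"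
    proof (rule Max_ge)
      show "finite ((\<lambda>i. d (1 + i) (fiter f 1 i x) (fiter f 1 i y)) ` {..<n * k})" by simp
      have "a = d (1 + i*k) (fiter f 1 (i*k) x) (fiter f 1 (i*k) y)"
        using i(2) by (simp add: add.commute)
      then show "a \<in> (\<lambda>i. d (1 + i) (fiter f 1 i x) (fiter f 1 i y)) ` {..<n * k}"
        using ik by (intro image_eqI[where x="i*k"]) auto
    qed
  qed
  finally show ?thesis .
qed

lemma equi_iter:
  assumes T: "TNDS X d f" and E: "equicont_seq X d f"
  shows "\<epsilon> > 0 \<Longrightarrow> \<exists>\<delta>>0. \<forall>j\<ge>1. \<forall>x\<in>X j. \<forall>y\<in>X j.
           d j x y < \<delta> \<longrightarrow> d (j+i) (fiter f j i x) (fiter f j i y) < \<epsilon>"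
proof (induction i arbitrary: \<epsilon>)
  case 0 then show ?case by (intro exI[of _ \<epsilon>]) auto
next
  case (Suc i)
  from E Suc.prems obtain \<delta>1 where d1: "\<delta>1 > 0" "\<forall>n\<ge>1. \<forall>x\<in>X n. \<forall>y\<in>X n.
      d n x y < \<delta>1 \<longrightarrow> d (Suc n) (f n x) (f n y) < \<epsilon>"
    unfolding equicont_seq_def by blast
  from Suc.IH[OF d1(1)] obtain \<delta> where d: "\<delta> > 0" "\<forall>j\<ge>1. \<forall>x\<in>X j. \<forall>y\<in>X j.
           d j x y < \<delta> \<longrightarrow> d (j+i) (fiter f j i x) (fiter f j i y) < \<delta>1" by blast
  show ?case
  proof (intro exI[of _ \<delta>] conjI allI impI ballI)
    fix j x y assume j: "j \<ge> 1" and x: "x \<in> X j" and y: "y \<in> X j" and dl: "d j x y < \<delta>"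
    have "d (j+i) (fiter f j i x) (fiter f j i y) < \<delta>1" using d j x y dl by blast
    moreover have "fiter f j i x \<in> X (j+i)" "fiter f j i y \<in> X (j+i)"
      using fiter_in[OF T j] x y by auto
    ultimately have "d (Suc (j+i)) (f (j+i) (fiter f j i x)) (f (j+i) (fiter f j i y)) < \<epsilon>"
      using d1(2) j by auto
    then show "d (j + Suc i) (fiter f j (Suc i) x) (fiter f j (Suc i) y) < \<epsilon>" by simp
  qed (use d in auto)
qed

lemma equi_all:
  assumes T: "TNDS X d f" and E: "equicont_seq X d f"
  shows "\<epsilon> > 0 \<Longrightarrow> \<exists>\<delta>>0. \<forall>i<m. \<forall>j\<ge>1. \<forall>x\<in>X j. \<forall>y\<in>X j.
           d j x y < \<delta> \<longrightarrow> d (j+i) (fiter f j i x) (fiter f j i y) < \<epsilon>"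
proof (induction m)
  case 0 then show ?case by (intro exI[of _ 1]) auto
next
  case (Suc m)
  then obtain \<delta>1 where d1: "\<delta>1 > 0" "\<forall>i<m. \<forall>j\<ge>1. \<forall>x\<in>X j. \<forall>y\<in>X j.
           d j x y < \<delta>1 \<longrightarrow> d (j+i) (fiter f j i x) (fiter f j i y) < \<epsilon>" by blast
  from equi_iter[OF T E Suc.prems, of m] obtain \<delta>2 where d2: "\<delta>2 > 0" "\<forall>j\<ge>1. \<forall>x\<in>X j. \<forall>y\<in>X j.
           d j x y < \<delta>2 \<longrightarrow> d (j+m) (fiter f j m x) (fiter f j m y) < \<epsilon>" by blast
  show ?case
  proof (intro exI[of _ "min \<delta>1 \<delta>2"] conjI allI impI ballI)
    fix i j x y assume i: "i < Suc m" and j: "j \<ge> 1" and x: "x \<in> X j" and y: "y \<in> X j"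
      and dl: "d j x y < min \<delta>1 \<delta>2"
    show "d (j+i) (fiter f j i x) (fiter f j i y) < \<epsilon>"
    proof (cases "i < m")
      case True then show ?thesis using d1 j x y dl by auto
    next
      case False then have "i = m" using i by simp
      then show ?thesis using d2 j x y dl by auto
    qed
  qed (use d1 d2 in auto)
qed

lemma sep_transfer:
  assumes T: "TNDS X d f" and k: "k \<ge> 1" and \<delta>: "\<delta> > 0"
    and D: "\<forall>i<k. \<forall>j\<ge>1. \<forall>x\<in>X j. \<forall>y\<in>X j.
           d j x y < \<delta> \<longrightarrow> d (j+i) (fiter f j i x) (fiter f j i y) < \<epsilon>"
    and x: "x \<in> X 1" and y: "y \<in> X 1" and m: "m \<ge> 1"
    and sep: "bowen_dist d f m x y > \<epsilon>"
  shows "bowen_dist (powX k d) (powf k f) ((m - 1) div k + 1) x y > \<delta> / 2"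
proof -
  have "{..<m} \<noteq> {}" using m by (simp add: lessThan_empty_iff)
  then obtain j where j: "j < m" "d (1 + j) (fiter f 1 j x) (fiter f 1 j y) > \<epsilon>"
    using sep unfolding bowen_dist_def by (subst (asm) Max_gr_iff) auto
  define q where "q = j div k"
  define r where "r = j mod k"
  have jqr: "j = q * k + r" unfolding q_def r_def by simp
  have r: "r < k" unfolding r_def using k by simp
  have fj: "fiter f 1 j = fiter f (1 + q * k) r \<circ> fiter f 1 (q * k)"
    using fiter_add[of f 1 "q*k" r] jqr by simp
  have ux: "fiter f 1 (q*k) x \<in> X (1 + q*k)" and uy: "fiter f 1 (q*k) y \<in> X (1 + q*k)"
    using fiter_in[OF T _ x] fiter_in[OF T _ y] by auto
  have "\<not> d (1 + q*k) (fiter f 1 (q*k) x) (fiter f 1 (q*k) y) < \<delta>"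
  proof
    assume "d (1 + q*k) (fiter f 1 (q*k) x) (fiter f 1 (q*k) y) < \<delta>"
    then have "d (1 + q*k + r) (fiter f (1+q*k) r (fiter f 1 (q*k) x)) (fiter f (1+q*k) r (fiter f 1 (q*k) y)) < \<epsilon>"
      using D[rule_format, OF r _ ux uy] by simp
    then show False using j fj jqr by (simp add: add.commute add.left_commute)
  qed
  then have big: "d (q*k + 1) (fiter f 1 (q*k) x) (fiter f 1 (q*k) y) > \<delta> / 2"
    using \<delta> by (simp add: add.commute)
  have qN: "q < (m - 1) div k + 1"
    unfolding q_def using j(1) by (simp add: div_le_mono less_Suc_eq_le)
  let ?g = "\<lambda>i. d (i * k + 1) (fiter f 1 (i*k) x) (fiter f 1 (i*k) y)"
  have eq: "bowen_dist (powX k d) (powf k f) ((m - 1) div k + 1) x y = Max (?g ` {..<(m - 1) div k + 1})"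
    unfolding bowen_dist_def powX_def fiter_pow by simp
  have "?g q \<le> Max (?g ` {..<(m - 1) div k + 1})"
    using qN by (intro Max_ge) auto
  then show ?thesis using eq big by linarith
qed

lemma rsep_val: "r_sep X d f n \<epsilon> = 0 \<or> r_sep X d f n \<epsilon> \<ge> 1"
proof -
  let ?S = "{E. finite E \<and> E \<subseteq> X 1 \<and> (\<forall>x\<in>E. \<forall>y\<in>E. x \<noteq> y \<longrightarrow> bowen_dist d f n x y > \<epsilon>)}"
  have e: "{} \<in> ?S" by simp
  show ?thesis
  proof (cases "\<exists>E\<in>?S. card E \<ge> 1")
    case True
    then obtain E where E: "E \<in> ?S" "card E \<ge> 1" ..
    have 1: "ereal (real (card E)) \<le> r_sep X d f n \<epsilon>"
      unfolding r_sep_def using E(1) by (rule SUP_upper)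
    have 2: "(1::ereal) \<le> ereal (real (card E))" using E(2) by simp
    from 2 1 have "1 \<le> r_sep X d f n \<epsilon>" by (rule order.trans)
    then show ?thesis ..
  next
    case False
    have F: "card E = 0" if EE: "E \<in> ?S" for E
    proof (rule ccontr)
      assume "card E \<noteq> 0"
      then have "1 \<le> card E" by simp
      with EE have "\<exists>E\<in>?S. 1 \<le> card E" by (rule bexI[rotated])
      with False show False by contradiction
    qed
    have "r_sep X d f n \<epsilon> \<le> 0" unfolding r_sep_def
    proof (rule SUP_least)
      fix E assume "E \<in> ?S"
      then show "ereal (real (card E)) \<le> 0" using F by simp
    qed
    moreover have "ereal (real (card ({}::'a set))) \<le> r_sep X d f n \<epsilon>"
      unfolding r_sep_def using e by (rule SUP_upper)
    ultimately have "r_sep X d f n \<epsilon> = 0" by (simp add: zero_ereal_def[symmetric])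
    then show ?thesis ..
  qed
qed

lemma rsep_anti: "\<epsilon>1 \<le> \<epsilon>2 \<Longrightarrow> r_sep X d f n \<epsilon>2 \<le> r_sep X d f n \<epsilon>1"
  unfolding r_sep_def
proof (rule SUP_subset_mono)
  assume e: "\<epsilon>1 \<le> \<epsilon>2"
  show "{E. finite E \<and> E \<subseteq> X 1 \<and> (\<forall>x\<in>E. \<forall>y\<in>E. x \<noteq> y \<longrightarrow> \<epsilon>2 < bowen_dist d f n x y)}
     \<subseteq> {E. finite E \<and> E \<subseteq> X 1 \<and> (\<forall>x\<in>E. \<forall>y\<in>E. x \<noteq> y \<longrightarrow> \<epsilon>1 < bowen_dist d f n x y)}"
    using e by (auto intro: le_less_trans)
qed simp

lemma eln_mono:
  assumes r: "r = 0 \<or> r \<ge> 1" and s: "s = 0 \<or> s \<ge> 1" and rs: "r \<le> s"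
  shows "ereal_ln r \<le> ereal_ln s"
proof (cases "s = \<infinity>")
  case True then show ?thesis by (simp add: ereal_ln_def)
next
  case False
  then obtain b where b: "s = ereal b" using s by (cases s) auto
  then obtain a where a: "r = ereal a" using r rs by (cases r) auto
  show ?thesis
  proof (cases "a = 0")
    case True then show ?thesis using a b s by (auto simp: ereal_ln_def)
  next
    case False
    then have "a \<ge> 1" using r a by auto
    then show ?thesis using a b rs by (auto simp: ereal_ln_def)
  qed
qed

lemma eln_nonneg:
  assumes r: "r = 0 \<or> r \<ge> 1"
  shows "ereal_ln r \<ge> 0"
proof (cases "r = \<infinity>")
  case True then show ?thesis by (simp add: ereal_ln_def)
next
  case False
  then obtain a where a: "r = ereal a" using r by (cases r) auto
  then have "a = 0 \<or> a \<ge> 1" using r by simp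
  then have "ln a \<ge> 0" by (metis ln_ge_zero ln_0 order.refl)
  then show ?thesis using a by (simp add: ereal_ln_def)
qed

lemma lim_antitone:
  fixes h :: "real \<Rightarrow> ereal"
  assumes anti: "\<And>a b. 0 < a \<Longrightarrow> a \<le> b \<Longrightarrow> h b \<le> h a"
  shows "Lim (at_right 0) h = (SUP \<epsilon>\<in>{0<..}. h \<epsilon>)"
proof (rule tendsto_Lim)
  show "\<not> trivial_limit (at_right (0::real))" by simp
  show "(h \<longlongrightarrow> (SUP \<epsilon>\<in>{0<..}. h \<epsilon>)) (at_right 0)"
  proof (rule order_tendsto_iff[THEN iffD2], intro conjI allI impI)
    fix a assume "a < (SUP \<epsilon>\<in>{0<..}. h \<epsilon>)"
    then obtain e0 where e0: "e0 > 0" "a < h e0" by (auto simp: less_SUP_iff)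
    show "\<forall>\<^sub>F x in at_right 0. a < h x"
      unfolding eventually_at_right_field
      using e0 anti by (intro exI[of _ e0]) (auto intro: less_le_trans)
  next
    fix a assume a: "(SUP \<epsilon>\<in>{0<..}. h \<epsilon>) < a"
    show "\<forall>\<^sub>F x in at_right 0. h x < a"
      unfolding eventually_at_right_field
    proof (intro exI[of _ 1] conjI allI impI)
      fix y :: real assume "y > 0"
      then have "h y \<le> (SUP \<epsilon>\<in>{0<..}. h \<epsilon>)" by (intro SUP_upper) auto
      then show "h y < a" using a by simp
    qed simp
  qed
qed

lemma rsep_pow_le:
  assumes "k \<ge> 1" "n \<ge> 1"
  shows "r_sep (powX k X) (powX k d) (powf k f) n \<epsilon> \<le> r_sep X d f (n * k) \<epsilon>"
  unfolding r_sep_def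
proof (rule SUP_subset_mono)
  show "{E. finite E \<and> E \<subseteq> powX k X 1 \<and> (\<forall>x\<in>E. \<forall>y\<in>E. x \<noteq> y \<longrightarrow> \<epsilon> < bowen_dist (powX k d) (powf k f) n x y)}
    \<subseteq> {E. finite E \<and> E \<subseteq> X 1 \<and> (\<forall>x\<in>E. \<forall>y\<in>E. x \<noteq> y \<longrightarrow> \<epsilon> < bowen_dist d f (n * k) x y)}"
    using bowen_pow_le[OF assms(2,1), of d f] by (auto simp: powX_def) (meson less_le_trans)
qed simp

lemma rsep_le_pow:
  assumes T: "TNDS X d f" and k: "k \<ge> 1" and \<delta>: "\<delta> > 0"
    and D: "\<forall>i<k. \<forall>j\<ge>1. \<forall>x\<in>X j. \<forall>y\<in>X j.
           d j x y < \<delta> \<longrightarrow> d (j+i) (fiter f j i x) (fiter f j i y) < \<epsilon>"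
    and m: "m \<ge> 1"
  shows "r_sep X d f m \<epsilon> \<le> r_sep (powX k X) (powX k d) (powf k f) ((m - 1) div k + 1) (\<delta>/2)"
  unfolding r_sep_def
proof (rule SUP_subset_mono)
  show "{E. finite E \<and> E \<subseteq> X 1 \<and> (\<forall>x\<in>E. \<forall>y\<in>E. x \<noteq> y \<longrightarrow> \<epsilon> < bowen_dist d f m x y)}
    \<subseteq> {E. finite E \<and> E \<subseteq> powX k X 1 \<and> (\<forall>x\<in>E. \<forall>y\<in>E. x \<noteq> y \<longrightarrow> \<delta>/2 < bowen_dist (powX k d) (powf k f) ((m - 1) div k + 1) x y)}"
    using sep_transfer[OF T k \<delta> D _ _ m] by (auto simp: powX_def subset_iff)
qed simp

lemma limsup_compose_le:
  fixes C :: "nat \<Rightarrow> ereal"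
  assumes N: "filterlim N sequentially sequentially"
  shows "limsup (\<lambda>m. C (N m)) \<le> limsup C"
proof -
  have "\<forall>y>limsup C. eventually (\<lambda>m. y > C (N m)) sequentially"
  proof (intro allI impI)
    fix y assume "y > limsup C"
    then have "eventually (\<lambda>n. C n < y) sequentially" by (rule Limsup_lessD)
    then show "eventually (\<lambda>m. y > C (N m)) sequentially"
      using N unfolding filterlim_iff by auto
  qed
  then show ?thesis using Limsup_le_iff by blast
qed

lemma ereal_div_scale:
  assumes "n \<ge> 1" "k \<ge> 1"
  shows "x / ereal (real n) = ereal (real k) * (x / ereal (real (n * k)))"
  using assms by (cases x) (auto simp: field_simps)

lemma step1:
  assumes k: "k \<ge> 1"
  shows "limsup (\<lambda>n. ereal_ln (r_sep (powX k X) (powX k d) (powf k f) n \<epsilon>) / ereal (real n))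
     \<le> ereal (real k) * limsup (\<lambda>n. ereal_ln (r_sep X d f n \<epsilon>) / ereal (real n))"
proof -
  let ?a = "\<lambda>n. ereal_ln (r_sep X d f n \<epsilon>) / ereal (real n)"
  have "limsup (\<lambda>n. ereal_ln (r_sep (powX k X) (powX k d) (powf k f) n \<epsilon>) / ereal (real n))
      \<le> limsup (\<lambda>n. ereal (real k) * ?a (n * k))"
  proof (rule Limsup_mono)
    show "\<forall>\<^sub>F n in sequentially. ereal_ln (r_sep (powX k X) (powX k d) (powf k f) n \<epsilon>) / ereal (real n)
        \<le> ereal (real k) * ?a (n * k)"
      unfolding eventually_sequentially
    proof (intro exI[of _ 1] allI impI)
      fix n :: nat assume n: "n \<ge> 1"
      have "ereal_ln (r_sep (powX k X) (powX k d) (powf k f) n \<epsilon>) \<le> ereal_ln (r_sep X d f (n*k) \<epsilon>)"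
        by (rule eln_mono[OF rsep_val rsep_val rsep_pow_le[OF k n]])
      then have "ereal_ln (r_sep (powX k X) (powX k d) (powf k f) n \<epsilon>) / ereal (real n)
          \<le> ereal_ln (r_sep X d f (n*k) \<epsilon>) / ereal (real n)"
        using n by (intro ereal_divide_right_mono) auto
      also have "\<dots> = ereal (real k) * ?a (n * k)"
        by (rule ereal_div_scale[OF n k])
      finally show "ereal_ln (r_sep (powX k X) (powX k d) (powf k f) n \<epsilon>) / ereal (real n)
          \<le> ereal (real k) * ?a (n * k)" .
    qed
  qed
  also have "\<dots> = ereal (real k) * limsup (\<lambda>n. ?a (n * k))"
    by (rule limsup_ereal_mult_left) simp
  also have "\<dots> \<le> ereal (real k) * limsup ?a"
  proof (rule ereal_mult_left_mono)
    have sm: "strict_mono (\<lambda>n::nat. n * k)" using k by (auto simp: strict_mono_def)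
    show "limsup (\<lambda>n. ?a (n * k)) \<le> limsup ?a"
      using limsup_subseq_mono[OF sm, of ?a] by (simp add: comp_def)
  qed simp
  finally show ?thesis .
qed

lemma div_aux:
  fixes y :: ereal and m c M :: real
  assumes y: "y \<ge> 0" and c: "0 < c" "c \<le> m" and M: "0 < M"
  shows "y / ereal m \<le> ereal (M / c) * (y / ereal M)"
proof (cases y)
  case (real r)
  then have r: "r \<ge> 0" using y by simp
  have m: "m > 0" using c by simp
  have "M / c * (r / M) = r / c" using M by simp
  moreover have "r / m \<le> r / c" using r c by (intro divide_left_mono) auto
  ultimately show ?thesis using real m M by simp
next
  case PInf
  have m: "m > 0" using c by simp
  have "M / c > 0" using M c by simp
  then show ?thesis using PInf m M c by simp
next
  case MInf then show ?thesis using y by simp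
qed

lemma hh_anti:
  assumes "0 < a" "a \<le> b"
  shows "limsup (\<lambda>n. ereal_ln (r_sep X d f n b) / ereal (real n))
       \<le> limsup (\<lambda>n. ereal_ln (r_sep X d f n a) / ereal (real n))"
proof (rule Limsup_mono)
  show "\<forall>\<^sub>F n in sequentially. ereal_ln (r_sep X d f n b) / ereal (real n)
       \<le> ereal_ln (r_sep X d f n a) / ereal (real n)"
    unfolding eventually_sequentially
  proof (intro exI[of _ 1] allI impI)
    fix n :: nat assume n: "n \<ge> 1"
    have "ereal_ln (r_sep X d f n b) \<le> ereal_ln (r_sep X d f n a)"
      by (rule eln_mono[OF rsep_val rsep_val rsep_anti[OF assms(2)]])
    then show "ereal_ln (r_sep X d f n b) / ereal (real n) \<le> ereal_ln (r_sep X d f n a) / ereal (real n)"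
      using n by (intro ereal_divide_right_mono) auto
  qed
qed

lemma step2:
  assumes T: "TNDS X d f" and k: "k \<ge> 1" and \<delta>: "\<delta> > 0"
    and D: "\<forall>i<k. \<forall>j\<ge>1. \<forall>x\<in>X j. \<forall>y\<in>X j.
           d j x y < \<delta> \<longrightarrow> d (j+i) (fiter f j i x) (fiter f j i y) < \<epsilon>"
  shows "limsup (\<lambda>n. ereal_ln (r_sep X d f n \<epsilon>) / ereal (real n))
     \<le> ereal (1 / real k) * limsup (\<lambda>n. ereal_ln (r_sep (powX k X) (powX k d) (powf k f) n (\<delta>/2)) / ereal (real n))"
proof -
  let ?b = "\<lambda>n. ereal_ln (r_sep (powX k X) (powX k d) (powf k f) n (\<delta>/2)) / ereal (real n)"
  define N where "N m = (m - 1) div k + 1" for m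
  define g where "g n = 1 / (real k + (1 - real k) / real n)" for n :: nat
  have gN: "g n = real n / real ((n - 1) * k + 1)" if n: "n \<ge> 1" for n
  proof -
    have e1: "real k + (1 - real k) / real n = ((real n - 1) * real k + 1) / real n"
      using n by (simp add: field_simps)
    have e2: "real ((n - 1) * k + 1) = (real n - 1) * real k + 1" using n by (simp add: of_nat_diff)
    show ?thesis unfolding g_def e1 e2 by simp
  qed
  have ptw: "ereal_ln (r_sep X d f m \<epsilon>) / ereal (real m) \<le> ereal (g (N m)) * ?b (N m)"
    if m: "m \<ge> 1" for m
  proof -
    let ?y = "ereal_ln (r_sep (powX k X) (powX k d) (powf k f) (N m) (\<delta>/2))"
    have y0: "?y \<ge> 0" by (rule eln_nonneg[OF rsep_val])
    have "ereal_ln (r_sep X d f m \<epsilon>) \<le> ?y"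
      unfolding N_def by (rule eln_mono[OF rsep_val rsep_val rsep_le_pow[OF T k \<delta> D m]])
    then have "ereal_ln (r_sep X d f m \<epsilon>) / ereal (real m) \<le> ?y / ereal (real m)"
      using m by (intro ereal_divide_right_mono) auto
    also have "\<dots> \<le> ereal (real (N m) / real ((N m - 1) * k + 1)) * (?y / ereal (real (N m)))"
    proof (rule div_aux[OF y0])
      have "(m - 1) div k * k \<le> m - 1" by simp
      then have "(m - 1) div k * k + 1 \<le> m" using m by arith
      then have "((m - 1) div k + 1 - 1) * k + 1 \<le> m" by simp
      then show "real ((N m - 1) * k + 1) \<le> real m" unfolding N_def of_nat_le_iff .
      show "0 < real ((N m - 1) * k + 1)" by (simp only: of_nat_0_less_iff)
    qed (auto simp: N_def)
    also have "\<dots> = ereal (g (N m)) * ?b (N m)" using gN[of "N m"] by (simp add: N_def)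
    finally show ?thesis .
  qed
  have "limsup (\<lambda>n. ereal_ln (r_sep X d f n \<epsilon>) / ereal (real n))
      \<le> limsup (\<lambda>m. ereal (g (N m)) * ?b (N m))"
    by (rule Limsup_mono) (use ptw in \<open>auto simp: eventually_sequentially intro!: exI[of _ 1]\<close>)
  also have "\<dots> \<le> limsup (\<lambda>n. ereal (g n) * ?b n)"
  proof (rule limsup_compose_le[of N "\<lambda>n. ereal (g n) * ?b n"])
    show "filterlim N sequentially sequentially"
      unfolding filterlim_at_top eventually_sequentially
    proof (intro allI exI[of _ "_ * k + 1"] allI impI)
      fix Z m assume "Z * k + 1 \<le> m"
      then have "Z * k \<le> m - 1" by arith
      then have "Z * k div k \<le> (m - 1) div k" by (rule div_le_mono)
      then show "Z \<le> N m" using k by (simp add: N_def)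
    qed
  qed
  also have "\<dots> = ereal (1 / real k) * limsup ?b"
  proof (rule ereal_limsup_lim_mult)
    have "(\<lambda>n. (1 - real k) / real n) \<longlonglongrightarrow> 0" by (rule lim_const_over_n)
    then have "g \<longlonglongrightarrow> 1 / (real k + 0)" unfolding g_def
      by (intro tendsto_intros) (use k in auto)
    then show "(\<lambda>n. ereal (g n)) \<longlonglongrightarrow> ereal (1 / real k)" by (intro tendsto_ereal) simp
  qed (use k in auto)
  finally show ?thesis .
qed

theorem mainTheorem9:
  fixes X :: "nat \<Rightarrow> 'a set" and d :: "nat \<Rightarrow> 'a \<Rightarrow> 'a \<Rightarrow> real"
    and f :: "nat \<Rightarrow> 'a \<Rightarrow> 'a" and k :: nat
  assumes "TNDS X d f" and "equicont_seq X d f" and "k \<ge> 1"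
  shows "htop (powX k X) (powX k d) (powf k f) = ereal (real k) * htop X d f"
proof -
  define hh where "hh \<epsilon> = limsup (\<lambda>n. ereal_ln (r_sep X d f n \<epsilon>) / ereal (real n))" for \<epsilon>
  define hk where "hk \<epsilon> = limsup (\<lambda>n. ereal_ln (r_sep (powX k X) (powX k d) (powf k f) n \<epsilon>) / ereal (real n))" for \<epsilon>
  have H: "htop X d f = (SUP \<epsilon>\<in>{0<..}. hh \<epsilon>)"
    unfolding htop_def hh_def by (rule lim_antitone) (rule hh_anti)
  have HK: "htop (powX k X) (powX k d) (powf k f) = (SUP \<epsilon>\<in>{0<..}. hk \<epsilon>)"
    unfolding htop_def hk_def by (rule lim_antitone) (rule hh_anti)
  have kpos: "ereal (real k) \<ge> 0" by simp
  have le1: "(SUP \<epsilon>\<in>{0<..}. hk \<epsilon>) \<le> ereal (real k) * (SUP \<epsilon>\<in>{0<..}. hh \<epsilon>)"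
  proof (rule SUP_least)
    fix \<epsilon> :: real assume e: "\<epsilon> \<in> {0<..}"
    have "hk \<epsilon> \<le> ereal (real k) * hh \<epsilon>" unfolding hk_def hh_def by (rule step1[OF assms(3)])
    also have "\<dots> \<le> ereal (real k) * (SUP \<epsilon>\<in>{0<..}. hh \<epsilon>)"
      using e by (intro ereal_mult_left_mono SUP_upper kpos)
    finally show "hk \<epsilon> \<le> ereal (real k) * (SUP \<epsilon>\<in>{0<..}. hh \<epsilon>)" .
  qed
  have le2: "(SUP \<epsilon>\<in>{0<..}. hh \<epsilon>) \<le> ereal (1 / real k) * (SUP \<epsilon>\<in>{0<..}. hk \<epsilon>)"
  proof (rule SUP_least)
    fix \<epsilon> :: real assume e: "\<epsilon> \<in> {0<..}"
    obtain \<delta> where \<delta>: "\<delta> > 0" and D: "\<forall>i<k. \<forall>j\<ge>1. \<forall>x\<in>X j. \<forall>y\<in>X j.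
           d j x y < \<delta> \<longrightarrow> d (j+i) (fiter f j i x) (fiter f j i y) < \<epsilon>"
      using equi_all[OF assms(1,2), of \<epsilon> k] e by auto
    have "hh \<epsilon> \<le> ereal (1 / real k) * hk (\<delta>/2)"
      unfolding hh_def hk_def by (rule step2[OF assms(1,3) \<delta> D])
    also have "\<dots> \<le> ereal (1 / real k) * (SUP \<epsilon>\<in>{0<..}. hk \<epsilon>)"
      using \<delta> by (intro ereal_mult_left_mono SUP_upper) auto
    finally show "hh \<epsilon> \<le> ereal (1 / real k) * (SUP \<epsilon>\<in>{0<..}. hk \<epsilon>)" .
  qed
  have "ereal (real k) * (SUP \<epsilon>\<in>{0<..}. hh \<epsilon>)
      \<le> ereal (real k) * (ereal (1 / real k) * (SUP \<epsilon>\<in>{0<..}. hk \<epsilon>))"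
    using le2 kpos by (rule ereal_mult_left_mono)
  also have "\<dots> = (SUP \<epsilon>\<in>{0<..}. hk \<epsilon>)"
    using assms(3) by (simp add: mult.assoc[symmetric])
  finally have le3: "ereal (real k) * (SUP \<epsilon>\<in>{0<..}. hh \<epsilon>) \<le> (SUP \<epsilon>\<in>{0<..}. hk \<epsilon>)" .
  show ?thesis unfolding H HK using le1 le3 by (rule antisym)
qed

end
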